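(* For both \textsc{OneMinMax} and \textsc{LOTZ}, the hypervolume contribution $\mathrm{HVC}(x,P)$ with a reference point $(r_1,r_2)$ satisfying $r_1\le -1$ and $r_2\le -1$ is diversity-favouring on $\{0,1\}^n\setminus\{0^n,1^n\}$.
   Context: Search space $\{0,1\}^n$; objectives maximised. $\textsc{OneMinMax}(x)=(\sum_ix_i,\,n-\sum_ix_i)$; $\textsc{LOTZ}(x)=(\mathrm{LO}(x),\mathrm{TZ}(x))$ with $\mathrm{LO}$ the number of leading ones and $\mathrm{TZ}$ the number of trailing zeros. Dominance: $y$ dominates $x$ if $f_i(y)\ge f_i(x)$ for all $i$, strictly for some $i$. Pareto set $X^*$ (non-dominated points), Pareto front $F^*=f(X^* )$. Populations $P$ are sets of mutually non-dominated points with distinct objective vectors (as maintained by SEMO/GSEMO). HVC: sort $P$ by increasing $f_1$ as $x_1,\dots,x_\mu$, set $f_1(x_0)=r_1$, $f_2(x_{\mu+1})=r_2$, and $\mathrm{HVC}(x_i,P)=(f_1(x_i)-f_1(x_{i-1}))(f_2(x_i)-f_2(x_{i+1}))$. Good: w.r.t. $P$, $x\in P\cap X^*$ is good if some Hamming neighbour $y$ of $x$ satisfies $y\in X^*$ and $f(y)\notin f(P)$; otherwise bad. A measure $\mathrm{score}(x,P)$ is diversity-favouring on $S\subseteq\{0,1\}^n$ (w.r.t. $f$) if for every population $P$ and all $x,y\in P\cap X^*\cap S$ with $x$ bad and $y$ good, $\mathrm{score}(x,P)<\mathrm{score}(y,P)$. *)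

theory Defs
  imports Complex_Main
begin

definition OneMinMax :: "bool list \<Rightarrow> nat \<times> nat" where
  "OneMinMax x = (count_list x True, length x - count_list x True)"

definition LO :: "bool list \<Rightarrow> nat" where
  "LO x = length (takeWhile (\<lambda>b. b) x)"

definition TZ :: "bool list \<Rightarrow> nat" where
  "TZ x = length (takeWhile (\<lambda>b. \<not> b) (rev x))"

definition LOTZ :: "bool list \<Rightarrow> nat \<times> nat" where
  "LOTZ x = (LO x, TZ x)"

definition space :: "nat \<Rightarrow> bool list set" where
  "space n = {x. length x = n}"

definition dominates :: "(bool list \<Rightarrow> nat \<times> nat) \<Rightarrow> bool list \<Rightarrow> bool list \<Rightarrow> bool" where
  "dominates f y x \<longleftrightarrow> fst (f y) \<ge> fst (f x) \<and> snd (f y) \<ge> snd (f x)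
      \<and> (fst (f y) > fst (f x) \<or> snd (f y) > snd (f x))"

definition pareto_set :: "nat \<Rightarrow> (bool list \<Rightarrow> nat \<times> nat) \<Rightarrow> bool list set" where
  "pareto_set n f = {x \<in> space n. \<not> (\<exists>y \<in> space n. dominates f y x)}"

definition population :: "nat \<Rightarrow> (bool list \<Rightarrow> nat \<times> nat) \<Rightarrow> bool list set \<Rightarrow> bool" where
  "population n f P \<longleftrightarrow> finite P \<and> P \<subseteq> space n \<and> inj_on f P
      \<and> (\<forall>x \<in> P. \<forall>y \<in> P. \<not> dominates f y x)"

definition hamming_neighbour :: "bool list \<Rightarrow> bool list \<Rightarrow> bool" where
  "hamming_neighbour x y \<longleftrightarrow> length x = length y
      \<and> card {i. i < length x \<and> x ! i \<noteq> y ! i} = 1"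

definition good :: "nat \<Rightarrow> (bool list \<Rightarrow> nat \<times> nat) \<Rightarrow> bool list set \<Rightarrow> bool list \<Rightarrow> bool" where
  "good n f P x \<longleftrightarrow> x \<in> P \<inter> pareto_set n f
      \<and> (\<exists>y. hamming_neighbour x y \<and> y \<in> pareto_set n f \<and> f y \<notin> f ` P)"

definition bad :: "nat \<Rightarrow> (bool list \<Rightarrow> nat \<times> nat) \<Rightarrow> bool list set \<Rightarrow> bool list \<Rightarrow> bool" where
  "bad n f P x \<longleftrightarrow> x \<in> P \<inter> pareto_set n f \<and> \<not> good n f P x"

definition diversity_favouring ::
  "nat \<Rightarrow> (bool list \<Rightarrow> nat \<times> nat) \<Rightarrow> (bool list \<Rightarrow> bool list set \<Rightarrow> real) \<Rightarrow> bool list set \<Rightarrow> bool" where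
  "diversity_favouring n f score S \<longleftrightarrow>
     (\<forall>P. population n f P \<longrightarrow>
        (\<forall>x \<in> P \<inter> pareto_set n f \<inter> S. \<forall>y \<in> P \<inter> pareto_set n f \<inter> S.
            bad n f P x \<longrightarrow> good n f P y \<longrightarrow> score x P < score y P))"

text \<open>Hypervolume contribution: with P sorted by increasing first objective, the
  predecessor x_{i-1} of x is the element of P with the largest first objective below
  that of x (or the reference value r1 if none), and the successor x_{i+1} is the element
  with the smallest first objective above that of x (or reference value r2 if none).\<close>
definition hvc :: "(bool list \<Rightarrow> nat \<times> nat) \<Rightarrow> real \<Rightarrow> real \<Rightarrow> bool list \<Rightarrow> bool list set \<Rightarrow> real" where
  "hvc f r1 r2 x P =
     (let L = {y \<in> P. fst (f y) < fst (f x)};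
          R = {y \<in> P. fst (f y) > fst (f x)};
          prev1 = (if L = {} then r1 else real (fst (f (arg_max_on (\<lambda>y. fst (f y)) L))));
          next2 = (if R = {} then r2 else real (snd (f (arg_min_on (\<lambda>y. fst (f y)) R))))
      in (real (fst (f x)) - prev1) * (real (snd (f x)) - next2))"

end

theory Submission
  imports Defs
begin


lemma hvc_core:
  fixes f :: "bool list \<Rightarrow> nat \<times> nat" and r1 r2 :: real
  assumes fin: "finite P" and xP: "x \<in> P"
    and nd: "\<forall>a\<in>P. \<forall>b\<in>P. \<not> dominates f b a"
    and sumle: "\<forall>z\<in>P. fst (f z) + snd (f z) \<le> k + m"
    and fx: "f x = (k, m)" and k1: "1 \<le> k" and m1: "1 \<le> m"
    and r: "r1 \<le> -1" "r2 \<le> -1"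
  shows "((k-1, m+1) \<in> f`P \<and> (k+1, m-1) \<in> f`P \<longrightarrow> hvc f r1 r2 x P = 1)
       \<and> (\<not> ((k-1, m+1) \<in> f`P \<and> (k+1, m-1) \<in> f`P) \<longrightarrow> hvc f r1 r2 x P \<ge> 2)"
proof -
  define L where "L = {y \<in> P. fst (f y) < fst (f x)}"
  define R where "R = {y \<in> P. fst (f y) > fst (f x)}"
  define A where "A = real (fst (f x)) - (if L = {} then r1 else real (fst (f (arg_max_on (\<lambda>y. fst (f y)) L))))"
  define B where "B = real (snd (f x)) - (if R = {} then r2 else real (snd (f (arg_min_on (\<lambda>y. fst (f y)) R))))"
  have hv: "hvc f r1 r2 x P = A * B"
    unfolding hvc_def A_def B_def L_def R_def Let_def by simp
  have Aprop: "((k-1, m+1) \<in> f`P \<longrightarrow> A = 1) \<and> ((k-1, m+1) \<notin> f`P \<longrightarrow> A \<ge> 2)"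
  proof (cases "L = {}")
    case True
    have "(k-1, m+1) \<notin> f`P"
    proof
      assume "(k-1, m+1) \<in> f`P"
      then obtain z where "z \<in> P" "f z = (k-1, m+1)" by auto
      then have "z \<in> L" using k1 fx unfolding L_def by simp
      then show False using True by simp
    qed
    moreover have "A \<ge> 2" using True fx k1 r unfolding A_def by simp
    ultimately show ?thesis by simp
  next
    case False
    then obtain z0 where z0: "z0 \<in> L" by blast
    define p where "p = arg_max_on (\<lambda>y. fst (f y)) L"
    have pm: "p \<in> L \<and> (\<forall>y. y \<in> L \<longrightarrow> fst (f y) \<le> fst (f p))"
      unfolding p_def arg_max_on_def
      by (rule arg_max_nat_lemma[of "\<lambda>y. y \<in> L", OF z0]) (auto simp: L_def fx)
    have Aeq: "A = real k - real (fst (f p))" unfolding A_def p_def using False fx by simp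
    have pP: "p \<in> P" and plt: "fst (f p) < k" using pm fx unfolding L_def by auto
    show ?thesis
    proof (cases "(k-1, m+1) \<in> f`P")
      case True
      then obtain z where "z \<in> P" "f z = (k-1, m+1)" by auto
      then have "z \<in> L" using k1 fx unfolding L_def by auto
      then have "fst (f p) \<ge> k - 1" using pm \<open>f z = _\<close> by force
      then have "fst (f p) = k - 1" using plt by simp
      then show ?thesis using Aeq True k1 by simp
    next
      case nl: False
      have "fst (f p) \<noteq> k - 1"
      proof
        assume e: "fst (f p) = k - 1"
        have "\<not> dominates f x p" using nd pP xP by blast
        then have "snd (f p) > m" using e fx k1 unfolding dominates_def by auto
        moreover have "fst (f p) + snd (f p) \<le> k + m" using sumle pP by blast
        ultimately have "snd (f p) = m + 1" using e k1 by linarith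
        then have "f p = (k-1, m+1)" using e by (metis prod.collapse)
        then show False using nl pP by force
      qed
      then have "fst (f p) + 2 \<le> k" using plt by linarith
      then have "A \<ge> 2" using Aeq by linarith
      then show ?thesis using nl by simp
    qed
  qed
  have Bprop: "((k+1, m-1) \<in> f`P \<longrightarrow> B = 1) \<and> ((k+1, m-1) \<notin> f`P \<longrightarrow> B \<ge> 2)"
  proof (cases "R = {}")
    case True
    have "(k+1, m-1) \<notin> f`P"
    proof
      assume "(k+1, m-1) \<in> f`P"
      then obtain z where "z \<in> P" "f z = (k+1, m-1)" by auto
      then have "z \<in> R" using fx unfolding R_def by simp
      then show False using True by simp
    qed
    moreover have "B \<ge> 2" using True fx m1 r unfolding B_def by simp
    ultimately show ?thesis by simp
  next
    case False
    define q where "q = arg_min_on (\<lambda>y. fst (f y)) R"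
    have finR: "finite R" using fin unfolding R_def by simp
    have qR: "q \<in> R" unfolding q_def using arg_min_if_finite(1)[OF finR False] .
    have qmin: "\<And>y. y \<in> R \<Longrightarrow> fst (f q) \<le> fst (f y)"
      unfolding q_def by (rule arg_min_least[OF finR False])
    have Beq: "B = real m - real (snd (f q))" unfolding B_def q_def using False fx by simp
    have qP: "q \<in> P" and qgt: "fst (f q) > k" using qR fx unfolding R_def by auto
    have "\<not> dominates f q x" using nd qP xP by blast
    then have qlt: "snd (f q) < m" using qgt fx unfolding dominates_def by auto
    have qsum: "fst (f q) + snd (f q) \<le> k + m" using sumle qP by blast
    show ?thesis
    proof (cases "(k+1, m-1) \<in> f`P")
      case True
      then obtain z where zP: "z \<in> P" and fz: "f z = (k+1, m-1)" by auto
      then have "z \<in> R" using fx unfolding R_def by auto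
      then have "fst (f q) \<le> k + 1" using qmin fz by force
      then have e: "fst (f q) = k + 1" using qgt by simp
      have "\<not> dominates f z q" using nd qP zP by blast
      then have "snd (f q) \<ge> m - 1" using e fz unfolding dominates_def by auto
      then have "snd (f q) = m - 1" using qlt by simp
      then show ?thesis using Beq True m1 by simp
    next
      case nl: False
      have "snd (f q) \<noteq> m - 1"
      proof
        assume e: "snd (f q) = m - 1"
        then have "fst (f q) = k + 1" using qsum qgt m1 by linarith
        then have "f q = (k+1, m-1)" using e by (metis prod.collapse)
        then show False using nl qP by force
      qed
      then have "snd (f q) + 2 \<le> m" using qlt by linarith
      then have "B \<ge> 2" using Beq by linarith
      then show ?thesis using nl by simp
    qed
  qed
  show ?thesis
  proof (intro conjI impI)
    assume "(k-1, m+1) \<in> f`P \<and> (k+1, m-1) \<in> f`P"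
    then show "hvc f r1 r2 x P = 1" using hv Aprop Bprop by simp
  next
    assume nb: "\<not> ((k-1, m+1) \<in> f`P \<and> (k+1, m-1) \<in> f`P)"
    have A1: "A \<ge> 1" "B \<ge> 1" using Aprop Bprop by linarith+
    show "hvc f r1 r2 x P \<ge> 2"
    proof (cases "(k-1, m+1) \<in> f`P")
      case True
      then have "B \<ge> 2" using nb Bprop by simp
      then have "1 * 2 \<le> A * B" using A1 by (intro mult_mono) auto
      then show ?thesis using hv by simp
    next
      case False
      then have "A \<ge> 2" using Aprop by simp
      then have "2 * 1 \<le> A * B" using A1 by (intro mult_mono) auto
      then show ?thesis using hv by simp
    qed
  qed
qed



lemma LO_Nil[simp]: "LO [] = 0" by (simp add: LO_def)
lemma TZ_Nil[simp]: "TZ [] = 0" by (simp add: TZ_def)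

lemma LO_Cons[simp]: "LO (c # x) = (if c then Suc (LO x) else 0)"
  by (simp add: LO_def)

lemma TZ_Cons[simp]: "TZ (c # x) = (if True \<notin> set x then (if c then length x else Suc (length x)) else TZ x)"
proof (cases "True \<notin> set x")
  case True
  have "takeWhile Not (rev x @ [c]) = rev x @ takeWhile Not [c]"
    by (rule takeWhile_append2) (use True in auto)
  then show ?thesis using True by (simp add: TZ_def)
next
  case False
  then have "True \<in> set (rev x)" by auto
  then have "takeWhile Not (rev x @ [c]) = takeWhile Not (rev x)"
    by (rule takeWhile_append1) simp
  then show ?thesis using False by (simp add: TZ_def)
qed

lemma LO_TZ_le: "LO x + TZ x \<le> length x"
proof (induct x)
  case Nil then show ?case by simp
next
  case (Cons c x)
  have "TZ x \<le> length x" using Cons by simp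
  moreover have "True \<notin> set x \<Longrightarrow> LO x = 0"
    by (cases x) auto
  ultimately show ?case using Cons by auto
qed

lemma all_false_rep: "True \<notin> set x \<Longrightarrow> x = replicate (length x) False"
  by (simp add: list_eq_iff_nth_eq) (metis nth_mem)

lemma LO_TZ_shape: "LO x + TZ x = length x \<Longrightarrow> x = replicate (LO x) True @ replicate (TZ x) False"
proof (induct x)
  case Nil then show ?case by simp
next
  case (Cons c x)
  have le: "LO x + TZ x \<le> length x" by (rule LO_TZ_le)
  show ?case
  proof (cases "True \<notin> set x")
    case True
    have lo0: "LO x = 0" using True by (cases x) auto
    have "x = replicate (length x) False" using True by (rule all_false_rep)
    then show ?thesis using True lo0 Cons.prems by (cases c) (auto simp: replicate_append_same)
  next
    case False
    then have tz: "TZ (c # x) = TZ x" by simp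
    show ?thesis
    proof (cases c)
      case True
      then have "LO x + TZ x = length x" using Cons.prems tz by simp
      then have "x = replicate (LO x) True @ replicate (TZ x) False" by (rule Cons.hyps)
      then show ?thesis using True tz by simp
    next
      case False
      then show ?thesis using Cons.prems tz le by simp
    qed
  qed
qed

lemma LO_pt: "LO (replicate i True @ replicate j False) = i"
  by (induct i) (auto, cases j, auto)

lemma TZ_pt: "TZ (replicate i True @ replicate j False) = j"
proof (induct i)
  case 0
  have "takeWhile Not (replicate j False) = replicate j False" by (simp add: takeWhile_eq_all_conv)
  then show ?case by (simp add: TZ_def)
next
  case (Suc i)
  then show ?case by (cases i) auto
qed

definition pt :: "nat \<Rightarrow> nat \<Rightarrow> bool list" where
  "pt n i = replicate i True @ replicate (n - i) False"

lemma pt_len: "i \<le> n \<Longrightarrow> length (pt n i) = n"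
  by (simp add: pt_def)

lemma pt_nth: "i \<le> n \<Longrightarrow> p < n \<Longrightarrow> pt n i ! p = (p < i)"
  by (simp add: pt_def nth_append)

lemma LOTZ_pt: "LOTZ (pt n i) = (i, n - i)"
  by (simp add: pt_def LOTZ_def LO_pt TZ_pt)

lemma pareto_LOTZ: "x \<in> pareto_set n LOTZ \<longleftrightarrow> length x = n \<and> LO x + TZ x = n"
proof
  assume a: "x \<in> pareto_set n LOTZ"
  then have len: "length x = n" by (simp add: pareto_set_def space_def)
  have le: "LO x + TZ x \<le> n" using LO_TZ_le[of x] len by simp
  have "\<not> LO x + TZ x < n"
  proof
    assume lt: "LO x + TZ x < n"
    have "pt n (LO x) \<in> space n" using lt by (simp add: space_def pt_len)
    moreover have "dominates LOTZ (pt n (LO x)) x"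
      using lt LOTZ_pt[of n "LO x"] unfolding dominates_def by (auto simp: LOTZ_def[of x])
    ultimately show False using a by (auto simp: pareto_set_def)
  qed
  then show "length x = n \<and> LO x + TZ x = n" using le len by simp
next
  assume a: "length x = n \<and> LO x + TZ x = n"
  have "\<not> dominates LOTZ y x" if "y \<in> space n" for y
  proof -
    have "LO y + TZ y \<le> n" using LO_TZ_le[of y] that by (simp add: space_def)
    then show ?thesis using a by (auto simp: dominates_def LOTZ_def)
  qed
  then show "x \<in> pareto_set n LOTZ" using a by (auto simp: pareto_set_def space_def)
qed

lemma pareto_LOTZ_pt: "x \<in> pareto_set n LOTZ \<longleftrightarrow> (\<exists>i\<le>n. x = pt n i)"
proof
  assume "x \<in> pareto_set n LOTZ"
  then have a: "length x = n" "LO x + TZ x = n" by (auto simp: pareto_LOTZ)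
  then have "x = replicate (LO x) True @ replicate (TZ x) False" using LO_TZ_shape by simp
  moreover have "TZ x = n - LO x" using a by simp
  ultimately have "x = pt n (LO x)" by (simp add: pt_def)
  moreover have "LO x \<le> n" using a by simp
  ultimately show "\<exists>i\<le>n. x = pt n i" by blast
next
  assume "\<exists>i\<le>n. x = pt n i"
  then obtain i where "i \<le> n" "x = pt n i" by auto
  then show "x \<in> pareto_set n LOTZ"
    by (simp add: pareto_LOTZ pt_len pt_def LO_pt TZ_pt)
qed

lemma ham_pt: assumes "i \<le> n" "j \<le> n"
  shows "hamming_neighbour (pt n i) (pt n j) \<longleftrightarrow> (i = j + 1 \<or> j = i + 1)"
proof -
  have "{p. p < length (pt n i) \<and> pt n i ! p \<noteq> pt n j ! p} = {min i j..<max i j}"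
    using assms by (auto simp: pt_len pt_nth)
  then have c: "card {p. p < length (pt n i) \<and> pt n i ! p \<noteq> pt n j ! p} = max i j - min i j" by simp
  have "hamming_neighbour (pt n i) (pt n j) \<longleftrightarrow> max i j - min i j = 1"
    unfolding hamming_neighbour_def c using assms by (simp add: pt_len)
  then show ?thesis by linarith
qed

lemma pareto_OMM: "pareto_set n OneMinMax = space n"
proof -
  have "\<not> dominates OneMinMax y x" if "y \<in> space n" "x \<in> space n" for x y
  proof -
    have "length y = n" "length x = n" using that by (auto simp: space_def)
    then have "count_list y True \<le> n" "count_list x True \<le> n"
      using count_le_length[of y True] count_le_length[of x True] by auto
    then show ?thesis using that by (auto simp: dominates_def OneMinMax_def space_def)
  qed
  then show ?thesis by (auto simp: pareto_set_def)
qed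

lemma count_upd: "i < length x \<Longrightarrow>
  count_list (x[i:=v]) a + (if x!i = a then 1 else 0) = count_list x a + (if v = a then 1 else 0)"
proof (induct x arbitrary: i)
  case Nil then show ?case by simp
next
  case (Cons c x)
  show ?case
  proof (cases i)
    case 0
    then show ?thesis by auto
  next
    case (Suc j)
    then have "j < length x" using Cons.prems by simp
    from Cons.hyps[OF this] Suc show ?thesis by auto
  qed
qed

lemma ham_upd: assumes "i < length x" "v \<noteq> x ! i"
  shows "hamming_neighbour x (x[i := v])"
proof -
  have "{p. p < length x \<and> x ! p \<noteq> x[i := v] ! p} = {i}"
    using assms by (auto simp: nth_list_update)
  then show ?thesis by (simp add: hamming_neighbour_def)
qed

lemma ham_OMM: assumes "hamming_neighbour x y"
  shows "count_list y True = count_list x True + 1 \<or> count_list x True = count_list y True + 1"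
proof -
  have len: "length x = length y" using assms by (simp add: hamming_neighbour_def)
  have "card {p. p < length x \<and> x ! p \<noteq> y ! p} = 1" using assms unfolding hamming_neighbour_def by (rule conjunct2)
  then obtain i where S: "{p. p < length x \<and> x ! p \<noteq> y ! p} = {i}" by (rule card_1_singletonE)
  then have il: "i < length x" and ne: "x ! i \<noteq> y ! i" by auto
  have eq: "\<And>p. p < length x \<Longrightarrow> p \<noteq> i \<Longrightarrow> x ! p = y ! p" using S by blast
  have "y = x[i := y ! i]"
  proof (rule nth_equalityI)
    show "length y = length (x[i:=y!i])" using len by simp
  next
    fix p assume "p < length y"
    then show "y ! p = x[i := y ! i] ! p" using len eq by (cases "p = i") auto
  qed
  then have "count_list y True + (if x!i = True then 1 else 0) = count_list x True + (if y ! i = True then 1 else 0)"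
    using count_upd[OF il, of "y ! i" True] by simp
  then show ?thesis using ne by (cases "x ! i") auto
qed



lemma OMM_point:
  assumes "z \<in> space n - {replicate n False, replicate n True}"
  shows "1 \<le> count_list z True \<and> count_list z True + 1 \<le> n"
proof -
  have len: "length z = n" and ne: "z \<noteq> replicate n False" "z \<noteq> replicate n True"
    using assms by (auto simp: space_def)
  have "True \<in> set z"
  proof (rule ccontr)
    assume "True \<notin> set z"
    then have "z = replicate (length z) False" by (rule all_false_rep)
    then show False using ne len by simp
  qed
  then have c1: "count_list z True \<noteq> 0" by (simp add: count_list_0_iff)
  have "False \<in> set z"
  proof (rule ccontr)
    assume a: "False \<notin> set z"
    have all: "\<forall>b\<in>set z. b = True" using a by (metis (full_types))
    have "z = replicate n True"
      by (rule replicate_eqI) (use len all in \<open>auto\<close>)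
    then show False using ne by simp
  qed
  then have "length (filter ((=) True) z) < length z" by (rule length_filter_less) simp
  then have "count_list z True < n" using len by (simp add: count_list_eq_length_filter)
  then show ?thesis using c1 by simp
qed

lemma OMM_part:
  fixes n :: nat and r1 r2 :: real
  assumes "r1 \<le> -1" and "r2 \<le> -1"
  shows "diversity_favouring n OneMinMax (hvc OneMinMax r1 r2)
           (space n - {replicate n False, replicate n True})"
  unfolding diversity_favouring_def
proof (intro allI impI ballI)
  fix P x y
  assume pop: "population n OneMinMax P"
    and xin: "x \<in> P \<inter> pareto_set n OneMinMax \<inter> (space n - {replicate n False, replicate n True})"
    and yin: "y \<in> P \<inter> pareto_set n OneMinMax \<inter> (space n - {replicate n False, replicate n True})"
    and bx: "bad n OneMinMax P x" and gy: "good n OneMinMax P y"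
  have fin: "finite P" and sub: "P \<subseteq> space n" and nd: "\<forall>a\<in>P. \<forall>b\<in>P. \<not> dominates OneMinMax b a"
    using pop by (auto simp: population_def)
  have sumle: "\<forall>z\<in>P. fst (OneMinMax z) + snd (OneMinMax z) \<le> n"
  proof
    fix z assume "z \<in> P"
    then have "length z = n" using sub by (auto simp: space_def)
    then show "fst (OneMinMax z) + snd (OneMinMax z) \<le> n"
      using count_le_length[of z True] by (simp add: OneMinMax_def)
  qed
  define kx where "kx = count_list x True"
  define ky where "ky = count_list y True"
  have kx: "1 \<le> kx" "kx + 1 \<le> n" using OMM_point xin unfolding kx_def by blast+
  have ky: "1 \<le> ky" "ky + 1 \<le> n" using OMM_point yin unfolding ky_def by blast+
  have lx: "length x = n" and ly: "length y = n" using xin yin by (auto simp: space_def)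
  have fx: "OneMinMax x = (kx, n - kx)" by (simp add: OneMinMax_def kx_def lx)
  have fy: "OneMinMax y = (ky, n - ky)" by (simp add: OneMinMax_def ky_def ly)
  have sx: "\<forall>z\<in>P. fst (OneMinMax z) + snd (OneMinMax z) \<le> kx + (n - kx)" using sumle kx by simp
  have sy: "\<forall>z\<in>P. fst (OneMinMax z) + snd (OneMinMax z) \<le> ky + (n - ky)" using sumle ky by simp
  have xP: "x \<in> P" and yP: "y \<in> P" using xin yin by auto
  note cx = hvc_core[OF fin xP nd sx fx kx(1) _ assms]
  note cy = hvc_core[OF fin yP nd sy fy ky(1) _ assms]
  have notgood: "\<And>w. hamming_neighbour x w \<Longrightarrow> w \<in> pareto_set n OneMinMax \<Longrightarrow> OneMinMax w \<in> OneMinMax ` P"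
    using bx xin unfolding bad_def good_def by blast
  have both: "(kx - 1, n - kx + 1) \<in> OneMinMax ` P \<and> (kx + 1, n - kx - 1) \<in> OneMinMax ` P"
  proof
    have "True \<in> set x" using kx by (metis count_list_0_iff kx_def not_one_le_zero)
    then obtain i where i: "i < length x" "x ! i = True" by (auto simp: in_set_conv_nth)
    let ?w = "x[i := False]"
    have h: "hamming_neighbour x ?w" using i by (intro ham_upd) auto
    have p: "?w \<in> pareto_set n OneMinMax" using lx by (simp add: pareto_OMM space_def)
    have "count_list ?w True + 1 = kx" using count_upd[OF i(1), of False True] i unfolding kx_def by simp
    then have cw: "count_list ?w True = kx - 1" by linarith
    then have "OneMinMax ?w = (kx - 1, n - kx + 1)" using lx kx cw by (simp add: OneMinMax_def)
    then show "(kx - 1, n - kx + 1) \<in> OneMinMax ` P" using notgood[OF h p] by simp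
  next
    have "False \<in> set x"
    proof (rule ccontr)
      assume "False \<notin> set x"
      then have "\<forall>b\<in>set x. True = b" by (metis (full_types))
      then have "filter ((=) True) x = x" by (simp add: filter_id_conv)
      then have "kx = n" using lx unfolding kx_def by (metis count_list_eq_length_filter)
      then show False using kx by simp
    qed
    then obtain i where i: "i < length x" "x ! i = False" by (auto simp: in_set_conv_nth)
    let ?w = "x[i := True]"
    have h: "hamming_neighbour x ?w" using i by (intro ham_upd) auto
    have p: "?w \<in> pareto_set n OneMinMax" using lx by (simp add: pareto_OMM space_def)
    have "count_list ?w True = kx + 1" using count_upd[OF i(1), of True True] i unfolding kx_def by simp
    then have "OneMinMax ?w = (kx + 1, n - kx - 1)" using lx kx by (simp add: OneMinMax_def)
    then show "(kx + 1, n - kx - 1) \<in> OneMinMax ` P" using notgood[OF h p] by simp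
  qed
  have hx: "hvc OneMinMax r1 r2 x P = 1" using cx kx both by auto
  obtain z where hz: "hamming_neighbour y z" and zp: "z \<in> pareto_set n OneMinMax"
    and zn: "OneMinMax z \<notin> OneMinMax ` P" using gy unfolding good_def by blast
  have lz: "length z = n" using zp by (simp add: pareto_OMM space_def)
  have "\<not> ((ky - 1, n - ky + 1) \<in> OneMinMax ` P \<and> (ky + 1, n - ky - 1) \<in> OneMinMax ` P)"
  proof
    assume a: "(ky - 1, n - ky + 1) \<in> OneMinMax ` P \<and> (ky + 1, n - ky - 1) \<in> OneMinMax ` P"
    from ham_OMM[OF hz] show False
    proof
      assume "count_list z True = count_list y True + 1"
      then have "OneMinMax z = (ky + 1, n - ky - 1)" using lz unfolding ky_def by (simp add: OneMinMax_def)
      then show False using a zn by simp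
    next
      assume "count_list y True = count_list z True + 1"
      then have "OneMinMax z = (ky - 1, n - ky + 1)" using lz ky unfolding ky_def by (simp add: OneMinMax_def)
      then show False using a zn by simp
    qed
  qed
  then have hy: "hvc OneMinMax r1 r2 y P \<ge> 2" using cy ky by auto
  show "hvc OneMinMax r1 r2 x P < hvc OneMinMax r1 r2 y P" using hx hy by simp
qed



lemma LOTZ_point:
  assumes "z \<in> pareto_set n LOTZ \<inter> (space n - {replicate n False, replicate n True})"
  obtains k where "z = pt n k" "1 \<le> k" "k + 1 \<le> n"
proof -
  obtain k where k: "k \<le> n" "z = pt n k" using assms pareto_LOTZ_pt by blast
  have "k \<noteq> 0"
  proof
    assume "k = 0"
    then have "z = replicate n False" using k by (simp add: pt_def)
    then show False using assms by auto
  qed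
  moreover have "k \<noteq> n" using assms k by (auto simp: pt_def)
  ultimately show ?thesis using that k by simp
qed

lemma LOTZ_part:
  fixes n :: nat and r1 r2 :: real
  assumes "r1 \<le> -1" and "r2 \<le> -1"
  shows "diversity_favouring n LOTZ (hvc LOTZ r1 r2)
           (space n - {replicate n False, replicate n True})"
  unfolding diversity_favouring_def
proof (intro allI impI ballI)
  fix P x y
  assume pop: "population n LOTZ P"
    and xin: "x \<in> P \<inter> pareto_set n LOTZ \<inter> (space n - {replicate n False, replicate n True})"
    and yin: "y \<in> P \<inter> pareto_set n LOTZ \<inter> (space n - {replicate n False, replicate n True})"
    and bx: "bad n LOTZ P x" and gy: "good n LOTZ P y"
  have fin: "finite P" and sub: "P \<subseteq> space n" and nd: "\<forall>a\<in>P. \<forall>b\<in>P. \<not> dominates LOTZ b a"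
    using pop by (auto simp: population_def)
  have sumle: "\<forall>z\<in>P. fst (LOTZ z) + snd (LOTZ z) \<le> n"
  proof
    fix z assume "z \<in> P"
    then have "length z = n" using sub by (auto simp: space_def)
    then show "fst (LOTZ z) + snd (LOTZ z) \<le> n"
      using LO_TZ_le[of z] by (simp add: LOTZ_def)
  qed
  obtain kx where kx: "x = pt n kx" "1 \<le> kx" "kx + 1 \<le> n" using LOTZ_point xin by blast
  obtain ky where ky: "y = pt n ky" "1 \<le> ky" "ky + 1 \<le> n" using LOTZ_point yin by blast
  have fx: "LOTZ x = (kx, n - kx)" using kx by (simp add: LOTZ_pt)
  have fy: "LOTZ y = (ky, n - ky)" using ky by (simp add: LOTZ_pt)
  have sx: "\<forall>z\<in>P. fst (LOTZ z) + snd (LOTZ z) \<le> kx + (n - kx)" using sumle kx by simp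
  have sy: "\<forall>z\<in>P. fst (LOTZ z) + snd (LOTZ z) \<le> ky + (n - ky)" using sumle ky by simp
  have xP: "x \<in> P" and yP: "y \<in> P" using xin yin by auto
  note cx = hvc_core[OF fin xP nd sx fx kx(2) _ assms]
  note cy = hvc_core[OF fin yP nd sy fy ky(2) _ assms]
  have notgood: "\<And>w. hamming_neighbour x w \<Longrightarrow> w \<in> pareto_set n LOTZ \<Longrightarrow> LOTZ w \<in> LOTZ ` P"
    using bx xin unfolding bad_def good_def by blast
  have both: "(kx - 1, n - kx + 1) \<in> LOTZ ` P \<and> (kx + 1, n - kx - 1) \<in> LOTZ ` P"
  proof
    have h: "hamming_neighbour x (pt n (kx - 1))" using kx by (simp add: ham_pt)
    have p: "pt n (kx - 1) \<in> pareto_set n LOTZ" unfolding pareto_LOTZ_pt by (rule exI[of _ "kx - 1"]) (use kx in simp)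
    have "LOTZ (pt n (kx - 1)) = (kx - 1, n - kx + 1)" using kx by (simp add: LOTZ_pt)
    then show "(kx - 1, n - kx + 1) \<in> LOTZ ` P" using notgood[OF h p] by simp
  next
    have h: "hamming_neighbour x (pt n (kx + 1))" using kx by (simp add: ham_pt)
    have p: "pt n (kx + 1) \<in> pareto_set n LOTZ" unfolding pareto_LOTZ_pt by (rule exI[of _ "kx + 1"]) (use kx in simp)
    have "LOTZ (pt n (kx + 1)) = (kx + 1, n - kx - 1)" using kx by (simp add: LOTZ_pt)
    then show "(kx + 1, n - kx - 1) \<in> LOTZ ` P" using notgood[OF h p] by simp
  qed
  have hx: "hvc LOTZ r1 r2 x P = 1" using cx kx both by auto
  obtain z where hz: "hamming_neighbour y z" and zp: "z \<in> pareto_set n LOTZ"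
    and zn: "LOTZ z \<notin> LOTZ ` P" using gy unfolding good_def by blast
  obtain i where i: "i \<le> n" "z = pt n i" using zp pareto_LOTZ_pt by blast
  have ij: "i = ky + 1 \<or> ky = i + 1" using hz i ky by (simp add: ham_pt) arith
  have "\<not> ((ky - 1, n - ky + 1) \<in> LOTZ ` P \<and> (ky + 1, n - ky - 1) \<in> LOTZ ` P)"
  proof
    assume a: "(ky - 1, n - ky + 1) \<in> LOTZ ` P \<and> (ky + 1, n - ky - 1) \<in> LOTZ ` P"
    from ij show False
    proof
      assume "i = ky + 1"
      then have "LOTZ z = (ky + 1, n - ky - 1)" using i by (simp add: LOTZ_pt)
      then show False using a zn by simp
    next
      assume "ky = i + 1"
      then have "LOTZ z = (ky - 1, n - ky + 1)" using i ky by (simp add: LOTZ_pt)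
      then show False using a zn by simp
    qed
  qed
  then have hy: "hvc LOTZ r1 r2 y P \<ge> 2" using cy ky by auto
  show "hvc LOTZ r1 r2 x P < hvc LOTZ r1 r2 y P" using hx hy by simp
qed


theorem lemma1:
  fixes n :: nat and r1 r2 :: real
  assumes "r1 \<le> -1" and "r2 \<le> -1"
  shows "diversity_favouring n OneMinMax (hvc OneMinMax r1 r2)
           (space n - {replicate n False, replicate n True})
       \<and> diversity_favouring n LOTZ (hvc LOTZ r1 r2)
           (space n - {replicate n False, replicate n True})"
  using OMM_part[OF assms] LOTZ_part[OF assms] by blast

end
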